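(* Let $G$ be an abelian profinite-$C$ group. Then the following are equivalent: (i) $G$ is a $C$-group; (ii) $G$ is a torsion group; (iii) $G$ has squarefree finite exponent.
   Context: A permutable complement of a subgroup $H$ of a group $G$ is a subgroup $K$ with $G=HK$ and $H\cap K=1$. A group is a $C$-group if every subgroup has a permutable complement. A profinite group $G$ is a profinite-$C$ group if every closed subgroup of $G$ has a closed permutable complement in $G$. *)

theory Defs
  imports "HOL-Analysis.Analysis" "HOL-Algebra.Coset" "HOL-Computational_Algebra.Squarefree"
begin

definition topological_group :: "('a, 'b) monoid_scheme \<Rightarrow> 'a topology \<Rightarrow> bool" where
  "topological_group G T \<longleftrightarrow> group G \<and> topspace T = carrier G \<and>
     continuous_map (prod_topology T T) T (\<lambda>(x, y). x \<otimes>\<^bsub>G\<^esub> y) \<and>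
     continuous_map T T (\<lambda>x. inv\<^bsub>G\<^esub> x)"

definition profinite_group :: "('a, 'b) monoid_scheme \<Rightarrow> 'a topology \<Rightarrow> bool" where
  "profinite_group G T \<longleftrightarrow> topological_group G T \<and> compact_space T \<and> Hausdorff_space T \<and>
     (\<forall>x \<in> topspace T. connected_component_of_set T x = {x})"

definition permutable_complement :: "('a, 'b) monoid_scheme \<Rightarrow> 'a set \<Rightarrow> 'a set \<Rightarrow> bool" where
  "permutable_complement G H K \<longleftrightarrow> subgroup K G \<and> H <#>\<^bsub>G\<^esub> K = carrier G \<and>
     H \<inter> K = {\<one>\<^bsub>G\<^esub>}"

definition C_group :: "('a, 'b) monoid_scheme \<Rightarrow> bool" where
  "C_group G \<longleftrightarrow> (\<forall>H. subgroup H G \<longrightarrow> (\<exists>K. permutable_complement G H K))"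

definition profinite_C_group :: "('a, 'b) monoid_scheme \<Rightarrow> 'a topology \<Rightarrow> bool" where
  "profinite_C_group G T \<longleftrightarrow> profinite_group G T \<and>
     (\<forall>H. subgroup H G \<and> closedin T H \<longrightarrow>
        (\<exists>K. closedin T K \<and> permutable_complement G H K))"

definition torsion_group :: "('a, 'b) monoid_scheme \<Rightarrow> bool" where
  "torsion_group G \<longleftrightarrow> (\<forall>x \<in> carrier G. \<exists>n::nat. n > 0 \<and> x [^]\<^bsub>G\<^esub> n = \<one>\<^bsub>G\<^esub>)"

definition is_exponent :: "('a, 'b) monoid_scheme \<Rightarrow> nat \<Rightarrow> bool" where
  "is_exponent G e \<longleftrightarrow> e > 0 \<and> (\<forall>x \<in> carrier G. x [^]\<^bsub>G\<^esub> e = \<one>\<^bsub>G\<^esub>) \<and>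
     (\<forall>m > 0. (\<forall>x \<in> carrier G. x [^]\<^bsub>G\<^esub> m = \<one>\<^bsub>G\<^esub>) \<longrightarrow> e \<le> m)"

end

theory Submission
  imports Defs "HOL-Algebra.Multiplicative_Group" begin

lemma (in group) subgroup_nat_pow_closed:
  assumes "subgroup K G" "k \<in> K" shows "k [^] (n::nat) \<in> K"
  using assms by (induction n) (auto simp: subgroup.one_closed subgroup.m_closed subgroup.subset)

lemma (in group) subgroup_int_pow_closed:
  assumes "subgroup K G" "k \<in> K" shows "k [^] (n::int) \<in> K"
proof -
  have "k \<in> carrier G" using assms subgroup.subset by blast
  then have "k [^] n \<in> generate G {k}" using generate_pow by blast
  moreover have "generate G {k} \<subseteq> K" using assms generate_subgroup_incl by blast
  ultimately show ?thesis by blast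
qed

lemma (in group) C_imp_torsion:
  assumes "C_group G" shows "torsion_group G"
proof (rule ccontr)
  assume "\<not> torsion_group G"
  then obtain x where x: "x \<in> carrier G" and nx: "\<forall>n::nat. n > 0 \<longrightarrow> x [^] n \<noteq> \<one>"
    unfolding torsion_group_def by blast
  have ord0: "ord x = 0" using x nx ord_eq_0 by blast
  define y where "y = x [^] (2::int)"
  have y: "y \<in> carrier G" using x y_def by simp
  define H where "H = generate G {y}"
  have H: "subgroup H G" unfolding H_def using y by (simp add: generate_is_subgroup)
  obtain K where K: "permutable_complement G H K" using assms H unfolding C_group_def by blast
  then have sK: "subgroup K G" and HK: "H <#> K = carrier G" and HK1: "H \<inter> K = {\<one>}"
    unfolding permutable_complement_def by auto
  have "x \<in> H <#> K" using HK x by simp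
  then obtain h k where h: "h \<in> H" and k: "k \<in> K" and xhk: "x = h \<otimes> k"
    unfolding set_mult_def by blast
  obtain i where hi: "h = y [^] (i::int)" using h y unfolding H_def generate_pow[OF y] by blast
  have hx: "h = x [^] (2*i)" using hi y_def x int_pow_pow by simp
  have kc: "k \<in> carrier G" using k sK subgroup.subset by blast
  have "k = inv h \<otimes> x" using xhk hx x kc by (simp add: inv_solve_left)
  also have "\<dots> = x [^] (-(2*i)) \<otimes> x [^] (1::int)" using x hx by (simp add: int_pow_neg)
  also have "\<dots> = x [^] (1 - 2*i)" using x int_pow_mult[of x "-(2*i)" 1] by simp
  finally have kx: "k = x [^] (1 - 2*i)" .
  have "k [^] (2::int) \<in> K" using sK k subgroup_int_pow_closed by blast
  moreover have "k [^] (2::int) = y [^] (1 - 2*i)" using kx y_def x int_pow_pow by (simp add: mult.commute)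
  moreover have "y [^] (1 - 2*i) \<in> H" unfolding H_def generate_pow[OF y] by blast
  ultimately have "y [^] (1 - 2*i) = \<one>" using HK1 by auto
  then have "x [^] (2 * (1 - 2*i)) = \<one>" using y_def x int_pow_pow by simp
  then have "int (ord x) dvd (2 * (1 - 2*i))" using int_pow_eq_id x by blast
  then have "2 * (1 - 2*i) = 0" using ord0 by simp
  then have "2*i = (1::int)" by simp
  then show False by (metis dvd_triv_left odd_one)
qed

lemma sqf_dvd_div:
  fixes p e d :: nat
  assumes p: "prime p" and pe: "p^2 dvd e" and de: "d dvd e" and sd: "squarefree d"
  shows "d dvd e div p"
proof -
  have "d * p dvd e"
  proof (cases "p dvd d")
    case False
    then have "coprime d p" using p by (metis prime_imp_coprime coprime_commute)
    moreover have "p dvd e" using pe by (metis dvd_power dvd_trans pos2)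
    ultimately show ?thesis using de by (simp add: divides_mult)
  next
    case True
    then obtain d' where d': "d = p * d'" by blast
    have "\<not> p dvd d'"
    proof
      assume "p dvd d'"
      then have "p^2 dvd d" using d' by (simp add: power2_eq_square)
      then show False using sd p squarefreeD by (metis not_prime_unit)
    qed
    then have "coprime p d'" using p by (metis prime_imp_coprime)
    then have "coprime (p^2) d'" by simp
    moreover have "d' dvd e" using de d' by auto
    ultimately have "p^2 * d' dvd e" using pe by (simp add: divides_mult)
    then show ?thesis using d' by (simp add: power2_eq_square mult.commute mult.left_commute)
  qed
  moreover have "p dvd e" using pe by (metis dvd_power dvd_trans pos2)
  moreover have "p \<noteq> 0" using p by auto
  ultimately show ?thesis by (simp add: dvd_div_iff_mult)
qed

lemma (in group) coprime_pow_mem: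
  fixes a b :: nat
  assumes M: "subgroup M G" and y: "y \<in> carrier G" and a: "y [^] a \<in> M" and b: "y [^] b \<in> M"
    and cop: "coprime a b" and a0: "a \<noteq> 0"
  shows "y \<in> M"
proof -
  obtain s t where st: "a * s = b * t + gcd a b" using bezout_nat[OF a0] by blast
  then have st1: "a * s = b * t + 1" using cop by simp
  have "y [^] (a * s) = y [^] (b * t) \<otimes> y" using y st1 by (simp add: nat_pow_mult)
  then have "y = inv (y [^] (b * t)) \<otimes> y [^] (a * s)" using y by (simp add: inv_solve_left)
  moreover have "y [^] (a * s) \<in> M" using subgroup_nat_pow_closed[OF M a] y by (simp add: nat_pow_pow)
  moreover have "y [^] (b * t) \<in> M" using subgroup_nat_pow_closed[OF M b] y by (simp add: nat_pow_pow)
  ultimately show ?thesis using M by (metis subgroup.m_closed subgroup.m_inv_closed)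
qed


lemma (in comm_group) ord_squarefree:
  assumes PC: "profinite_C_group G T" and x: "x \<in> carrier G" and ox: "ord x \<noteq> 0"
  shows "squarefree (ord x)"
proof (rule ccontr)
  assume "\<not> squarefree (ord x)"
  then obtain p :: nat where p: "prime p" and pd: "p^2 dvd ord x"
    using squarefree_factorial_semiring[OF ox] by blast
  obtain m where m: "ord x = p^2 * m" using pd by blast
  have m0: "m \<noteq> 0" using m ox by auto
  define y where "y = x [^] m"
  have y: "y \<in> carrier G" using x y_def by simp
  have oy: "ord y = p^2" unfolding y_def using ord_pow[OF x, of m] m m0 by simp
  define u where "u = y [^] p"
  have u: "u \<in> carrier G" using y u_def by simp
  have p0: "p \<noteq> 0" using p by auto
  have ou: "ord u = p" unfolding u_def using ord_pow[OF y, of p] oy p0 by (simp add: power2_eq_square)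
  define H where "H = generate G {u}"
  have H: "subgroup H G" unfolding H_def using u by (simp add: generate_is_subgroup)
  have Heq: "H = {u [^] k | k. k \<in> {0 .. ord u - 1}}"
    unfolding H_def using generate_pow_nat[OF u] ord_elems_inf_carrier[OF u] ou p0 by simp
  have "finite H" unfolding Heq by simp
  have PG: "profinite_group G T" using PC unfolding profinite_C_group_def by blast
  then have top: "topspace T = carrier G" and Hs: "Hausdorff_space T"
    unfolding profinite_group_def topological_group_def by auto
  have "closedin T H"
    using \<open>finite H\<close> Hs Hausdorff_imp_t1_space t1_space_closedin_finite top H subgroup.subset by metis
  then obtain K where "closedin T K" and K: "permutable_complement G H K"
    using PC H unfolding profinite_C_group_def by blast
  then have sK: "subgroup K G" and HK: "H <#> K = carrier G" and HK1: "H \<inter> K = {\<one>}"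
    unfolding permutable_complement_def by auto
  have "y \<in> H <#> K" using HK y by simp
  then obtain h k where h: "h \<in> H" and k: "k \<in> K" and yhk: "y = h \<otimes> k"
    unfolding set_mult_def by blast
  obtain i :: nat where hi: "h = u [^] i" using h unfolding Heq by blast
  have hc: "h \<in> carrier G" using hi u by simp
  have kc: "k \<in> carrier G" using k sK subgroup.subset by blast
  have kk: "k = inv h \<otimes> y" using yhk hc kc y by (simp add: inv_solve_left)
  have up: "u [^] p = \<one>" using ou u pow_ord_eq_1 by metis
  have "h [^] p = \<one>" using hi u up by (metis nat_pow_pow mult.commute nat_pow_one)
  then have "k [^] p = inv (h [^] p) \<otimes> y [^] p"
    using kk hc y by (simp add: pow_mult_distrib m_comm nat_pow_inv)
  also have "\<dots> = u" using \<open>h [^] p = \<one>\<close> u_def y by simp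
  finally have "u \<in> K" using subgroup_nat_pow_closed[OF sK k] by metis
  moreover have "u \<in> H" unfolding H_def by (simp add: generate.incl)
  ultimately have "u = \<one>" using HK1 by blast
  then have "ord u = 1" by simp
  then show False using ou p by simp
qed


lemma (in comm_group) torsion_sqf_imp_C:
  assumes tor: "\<forall>x\<in>carrier G. ord x \<noteq> 0" and sqf: "\<forall>x\<in>carrier G. squarefree (ord x)"
  shows "C_group G"
  unfolding C_group_def
proof (intro allI impI)
  fix H assume sH: "subgroup H G"
  define \<A> where "\<A> = {K. subgroup K G \<and> H \<inter> K = {\<one>}}"
  have triv: "{\<one>} \<in> \<A>" using triv_subgroup sH subgroup.one_closed by (auto simp: \<A>_def)
  have "\<exists>K\<in>\<A>. \<forall>X\<in>\<A>. K \<subseteq> X \<longrightarrow> X = K"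
  proof (rule subset_Zorn_nonempty)
    show "\<A> \<noteq> {}" using triv by blast
    fix \<C> assume ne: "\<C> \<noteq> {}" and ch: "subset.chain \<A> \<C>"
    have sub: "\<forall>K\<in>\<C>. subgroup K G \<and> H \<inter> K = {\<one>}" using ch by (auto simp: subset.chain_def \<A>_def)
    have tot: "\<forall>A\<in>\<C>. \<forall>B\<in>\<C>. A \<subseteq> B \<or> B \<subseteq> A" using ch by (auto simp: subset.chain_def)
    have "subgroup (\<Union>\<C>) G"
    proof (rule subgroup.intro)
      show "\<Union>\<C> \<subseteq> carrier G" using sub subgroup.subset by blast
      show "\<one> \<in> \<Union>\<C>" using ne sub subgroup.one_closed by blast
      fix a b assume a: "a \<in> \<Union>\<C>" and b: "b \<in> \<Union>\<C>"
      then obtain A B where A: "A \<in> \<C>" "a \<in> A" and B: "B \<in> \<C>" "b \<in> B" by blast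
      show "a \<otimes> b \<in> \<Union>\<C>"
      proof (cases "A \<subseteq> B")
        case True
        then have "a \<in> B" using A by blast
        moreover have "subgroup B G" using B sub by blast
        ultimately have "a \<otimes> b \<in> B" using B(2) subgroup.m_closed by metis
        then show ?thesis using B by blast
      next
        case False
        then have "B \<subseteq> A" using tot A B by blast
        then have "b \<in> A" using B by blast
        moreover have "subgroup A G" using A sub by blast
        ultimately have "a \<otimes> b \<in> A" using A(2) subgroup.m_closed by metis
        then show ?thesis using A by blast
      qed
    next
      fix a assume "a \<in> \<Union>\<C>"
      then obtain A where A: "A \<in> \<C>" "a \<in> A" by blast
      then have "subgroup A G" using sub by blast
      then have "inv a \<in> A" using A(2) subgroup.m_inv_closed by metis
      then show "inv a \<in> \<Union>\<C>" using A by blast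
    qed
    moreover have "H \<inter> \<Union>\<C> = {\<one>}"
      using sub ne sH subgroup.one_closed by blast
    ultimately show "\<Union>\<C> \<in> \<A>" by (simp add: \<A>_def)
  qed
  then obtain K where KA: "K \<in> \<A>" and Kmax: "\<forall>X\<in>\<A>. K \<subseteq> X \<longrightarrow> X = K" by blast
  have sK: "subgroup K G" and HK1: "H \<inter> K = {\<one>}" using KA by (auto simp: \<A>_def)
  define M where "M = H <#> K"
  have sM: "subgroup M G" unfolding M_def using mult_subgroups sH sK by blast
  have KM: "K \<subseteq> M"
  proof
    fix k assume "k \<in> K"
    then have "k = \<one> \<otimes> k" using sK subgroup.subset by (metis l_one subsetD)
    have "\<one> \<in> H" by (rule subgroup.one_closed[OF sH])
    then show "k \<in> M" unfolding M_def set_mult_def using \<open>k \<in> K\<close> \<open>k = \<one> \<otimes> k\<close> by blast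
  qed
  have key: "y \<in> M" if y: "y \<in> carrier G" and py: "prime (ord y)" for y
  proof (rule ccontr)
    assume yM: "y \<notin> M"
    have oy0: "ord y \<noteq> 0" using py by auto
    define Y where "Y = generate G {y}"
    have Yeq: "Y = {y [^] k | k. k \<in> (UNIV::nat set)}" unfolding Y_def using generate_pow_nat[OF y oy0] .
    have sY: "subgroup Y G" unfolding Y_def using y by (simp add: generate_is_subgroup)
    define K' where "K' = K <#> Y"
    have sK': "subgroup K' G" unfolding K'_def using mult_subgroups sK sY by blast
    have "H \<inter> K' = {\<one>}"
    proof
      show "{\<one>} \<subseteq> H \<inter> K'" using sH sK' subgroup.one_closed by blast
      show "H \<inter> K' \<subseteq> {\<one>}"
      proof
        fix z assume z: "z \<in> H \<inter> K'"
        then obtain k w where k: "k \<in> K" and w: "w \<in> Y" and zkw: "z = k \<otimes> w"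
          unfolding K'_def set_mult_def by blast
        obtain i :: nat where wi: "w = y [^] i" using w Yeq by blast
        have kc: "k \<in> carrier G" using k sK subgroup.subset by blast
        have zc: "z \<in> carrier G" using z sH subgroup.subset by blast
        have wc: "w \<in> carrier G" using wi y by simp
        have eq1: "inv k \<otimes> z = w" using zkw kc wc by (simp add: m_assoc[symmetric])
        have c1: "z \<otimes> inv k = inv k \<otimes> z" by (rule m_comm[OF zc inv_closed[OF kc]])
        have "w = z \<otimes> inv k" by (simp only: c1 eq1)
        moreover have "inv k \<in> K" by (rule subgroup.m_inv_closed[OF sK k])
        ultimately have wM: "w \<in> M" using z unfolding M_def set_mult_def by blast
        show "z \<in> {\<one>}"
        proof (cases "ord y dvd i")
          case True
          then have "w = \<one>" using wi y pow_eq_id by blast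
          then have "z = k" using zkw kc by simp
          then show ?thesis using HK1 z k by blast
        next
          case False
          then have "coprime i (ord y)" using py by (metis prime_imp_coprime coprime_commute)
          moreover have "i \<noteq> 0" using False by (metis dvd_0_right)
          moreover have "y [^] ord y \<in> M" using y sM subgroup.one_closed by simp
          ultimately have "y \<in> M" using coprime_pow_mem[OF sM y] wM wi by blast
          then show ?thesis using yM by blast
        qed
      qed
    qed
    then have "K' \<in> \<A>" using sK' by (simp add: \<A>_def)
    moreover have "K \<subseteq> K'"
    proof
      fix k assume "k \<in> K"
      then have "k = k \<otimes> \<one>" using sK subgroup.subset by (metis r_one subsetD)
      have "\<one> \<in> Y" by (rule subgroup.one_closed[OF sY])
      then show "k \<in> K'" unfolding K'_def set_mult_def using \<open>k \<in> K\<close> \<open>k = k \<otimes> \<one>\<close> by blast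
    qed
    ultimately have "K' = K" using Kmax by blast
    moreover have "y \<in> K'"
    proof -
      have "y = \<one> \<otimes> y" using y by simp
      have "\<one> \<in> K" by (rule subgroup.one_closed[OF sK])
      have "y \<in> Y" by (simp add: Y_def generate.incl)
      then show ?thesis unfolding K'_def set_mult_def using \<open>y = \<one> \<otimes> y\<close> \<open>\<one> \<in> K\<close> by blast
    qed
    ultimately show False using KM yM by blast
  qed
  have ind: "\<forall>x\<in>carrier G. ord x = n \<longrightarrow> x \<in> M" for n
  proof (induction n rule: less_induct)
    case (less n)
    show ?case
    proof (intro ballI impI)
      fix x assume x: "x \<in> carrier G" and on: "ord x = n"
      consider "n = 1" | "prime n" | "n \<noteq> 1 \<and> \<not> prime n" by blast
      then show "x \<in> M"
      proof cases
        case 1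
        then have "x = \<one>" using x on ord_eq_1 by blast
        then show ?thesis using sM subgroup.one_closed by blast
      next
        case 2
        then show ?thesis using key x on by blast
      next
        case 3
        have n0: "n \<noteq> 0" using tor x on by blast
        obtain p where p: "prime p" "p dvd n" using 3 prime_factor_nat by blast
        then obtain m where m: "n = p * m" by blast
        have p1: "p > 1" using p prime_gt_1_nat by blast
        have m0: "m \<noteq> 0" using m n0 by auto
        have m1: "m \<noteq> 1" using m 3 p by auto
        have mn: "m < n" using m p1 m0 by simp
        have "m > 1" using m0 m1 by auto
        then have pn: "p < n" using m p1 by simp
        have "ord (x [^] p) = m" using ord_pow[OF x, of p] on m p1 by simp
        then have xp: "x [^] p \<in> M" using less mn x by blast
        have "ord (x [^] m) = p" using ord_pow[OF x, of m] on m m0 by simp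
        then have xm: "x [^] m \<in> M" using less pn x by blast
        have "\<not> p dvd m"
        proof
          assume "p dvd m"
          then have "p^2 dvd n" using m by (simp add: power2_eq_square)
          then show False using sqf x on p squarefreeD by (metis not_prime_unit)
        qed
        then have "coprime p m" using p by (metis prime_imp_coprime)
        then show ?thesis using coprime_pow_mem[OF sM x xp xm] p1 by simp
      qed
    qed
  qed
  have "carrier G \<subseteq> M" using ind by blast
  moreover have "M \<subseteq> carrier G" using sM subgroup.subset by blast
  ultimately have "H <#> K = carrier G" unfolding M_def by blast
  then show "\<exists>K. permutable_complement G H K"
    using sK HK1 unfolding permutable_complement_def by blast
qed


lemma (in group) tg_lmult:
  assumes TG: "topological_group G T" and c: "c \<in> carrier G"
  shows "continuous_map T T (\<lambda>x. c \<otimes> x)"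
proof -
  have m: "continuous_map (prod_topology T T) T (\<lambda>(x, y). x \<otimes> y)" and top: "topspace T = carrier G"
    using TG unfolding topological_group_def by auto
  have "continuous_map T (prod_topology T T) (\<lambda>x. (c, x))"
    by (intro continuous_map_pairedI) (simp_all add: top c continuous_map_id[unfolded id_def])
  then have "continuous_map T T ((\<lambda>(x, y). x \<otimes> y) \<circ> (\<lambda>x. (c, x)))"
    using continuous_map_compose m by blast
  then show ?thesis by (simp add: o_def)
qed

lemma (in group) tg_pow:
  assumes TG: "topological_group G T"
  shows "continuous_map T T (\<lambda>x. x [^] (n::nat))"
proof (induction n)
  case 0
  have top: "topspace T = carrier G" using TG unfolding topological_group_def by auto
  show ?case by (simp add: top)
next
  case (Suc n)
  have m: "continuous_map (prod_topology T T) T (\<lambda>(x, y). x \<otimes> y)"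
    using TG unfolding topological_group_def by auto
  have "continuous_map T (prod_topology T T) (\<lambda>x. (x [^] n, x))"
    by (intro continuous_map_pairedI) (simp_all add: Suc continuous_map_id[unfolded id_def])
  then have "continuous_map T T ((\<lambda>(x, y). x \<otimes> y) \<circ> (\<lambda>x. (x [^] n, x)))"
    using continuous_map_compose m by blast
  then show ?case by (simp add: o_def)
qed

lemma (in comm_group) bounded_exp:
  assumes PG: "profinite_group G T" and tor: "torsion_group G"
  shows "\<exists>N::nat. N > 0 \<and> (\<forall>x\<in>carrier G. x [^] N = \<one>)"
proof -
  have TG: "topological_group G T" and top: "topspace T = carrier G" and cpt: "compact_space T"
    and Hs: "Hausdorff_space T"
    using PG unfolding profinite_group_def topological_group_def by auto
  have ordpos: "ord x \<noteq> 0" if "x \<in> carrier G" for x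
  proof -
    have "\<exists>n::nat. n > 0 \<and> x [^] n = \<one>" using tor that unfolding torsion_group_def by (rule bspec)
    then obtain n :: nat where n: "n > 0" "x [^] n = \<one>" by (elim exE conjE)
    then have "ord x dvd n" using pow_eq_id[OF that] by blast
    then show ?thesis using n(1) by (metis dvd_0_left_iff less_irrefl)
  qed
  define F where "F n = {x \<in> topspace T. x [^] Suc n \<in> {\<one>}}" for n
  have Fc: "closedin T (F n)" for n
    unfolding F_def
    by (rule closedin_continuous_map_preimage[OF tg_pow[OF TG]])
       (simp add: closedin_t1_singleton Hs Hausdorff_imp_t1_space top)
  have UF: "\<Union>(range F) = topspace T"
  proof
    show "\<Union>(range F) \<subseteq> topspace T" unfolding F_def by blast
    show "topspace T \<subseteq> \<Union>(range F)"
    proof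
      fix x assume x: "x \<in> topspace T"
      then have xc: "x \<in> carrier G" using top by simp
      have "Suc (ord x - 1) = ord x" using ordpos[OF xc] by simp
      then have "x \<in> F (ord x - 1)" unfolding F_def using x xc by simp
      then show "x \<in> \<Union>(range F)" by blast
    qed
  qed
  have "\<exists>n. T interior_of F n \<noteq> {}"
  proof (rule ccontr)
    assume "\<not> (\<exists>n. T interior_of F n \<noteq> {})"
    then have e: "\<And>n. T interior_of F n = {}" by blast
    have "T interior_of \<Union>(range F) = {}"
    proof (rule Baire_category_alt)
      show "completely_metrizable_space T \<or> locally_compact_space T \<and> regular_space T"
        using cpt Hs compact_imp_locally_compact_space compact_Hausdorff_imp_regular_space by blast
      show "countable (range F)" by simp
      fix S assume "S \<in> range F"
      then show "closedin T S \<and> T interior_of S = {}" using Fc e by auto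
    qed
    then have "topspace T = {}" using UF by simp
    then show False using top one_closed by blast
  qed
  then obtain n a where a: "a \<in> T interior_of F n" by blast
  define U where "U = T interior_of F n"
  have Uo: "openin T U" unfolding U_def by simp
  have UFn: "U \<subseteq> F n" unfolding U_def by (rule interior_of_subset)
  have ac: "a \<in> carrier G" using a UFn U_def unfolding F_def top by blast
  define W where "W g = {z \<in> topspace T. (a \<otimes> inv g) \<otimes> z \<in> U}" for g
  have Wo: "openin T (W g)" if "g \<in> carrier G" for g
    unfolding W_def using openin_continuous_map_preimage[OF tg_lmult[OF TG] Uo] ac that by simp
  have gW: "g \<in> W g" if g: "g \<in> carrier G" for g
  proof -
    have "(a \<otimes> inv g) \<otimes> g = a" using ac g by (simp add: m_assoc)
    then show ?thesis unfolding W_def using a U_def g top by simp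
  qed
  have "\<exists>\<F>. finite \<F> \<and> \<F> \<subseteq> W ` carrier G \<and> topspace T \<subseteq> \<Union>\<F>"
    using cpt unfolding compact_space_alt
  proof (elim allE impE)
    show "(\<forall>U\<in>W ` carrier G. openin T U) \<and> topspace T \<subseteq> \<Union>(W ` carrier G)"
      using Wo gW top by blast
  qed
  then obtain \<F> where Ff: "finite \<F>" and FW: "\<F> \<subseteq> W ` carrier G" and Fcov: "topspace T \<subseteq> \<Union>\<F>"
    by blast
  obtain S where S: "S \<subseteq> carrier G" "finite S" "\<F> = W ` S"
    using finite_subset_image[OF Ff FW] by blast
  define N where "N = Suc n * ord a * (\<Prod>g\<in>S. ord g)"
  have N0: "N > 0" unfolding N_def using ordpos ac S by (simp add: subset_iff)
  have "\<forall>z\<in>carrier G. z [^] N = \<one>"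
  proof
    fix z assume z: "z \<in> carrier G"
    then obtain g where g: "g \<in> S" and zW: "z \<in> W g" using Fcov S top by blast
    have gc: "g \<in> carrier G" using g S by blast
    define w where "w = (a \<otimes> inv g) \<otimes> z"
    have wU: "w \<in> U" using zW unfolding W_def w_def by blast
    have wc: "w \<in> carrier G" using ac gc z w_def by simp
    have wn: "w [^] Suc n = \<one>" using wU UFn unfolding F_def by blast
    have zeq: "z = (g \<otimes> inv a) \<otimes> w"
    proof -
      have "(g \<otimes> inv a) \<otimes> w = (g \<otimes> inv a) \<otimes> (a \<otimes> inv g) \<otimes> z"
        using ac gc z w_def by (simp add: m_assoc)
      also have "(g \<otimes> inv a) \<otimes> (a \<otimes> inv g) = \<one>"
        using ac gc by (metis inv_mult_group inv_closed m_closed r_inv inv_inv m_comm)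
      finally show ?thesis using z by simp
    qed
    have "z [^] N = (g [^] N \<otimes> inv a [^] N) \<otimes> w [^] N"
      using zeq ac gc wc by (simp add: pow_mult_distrib m_comm)
    moreover have "g [^] N = \<one>"
      using pow_eq_id[OF gc] S g unfolding N_def by (simp add: dvd_prodI)
    moreover have "inv a [^] N = \<one>"
      using pow_eq_id[of "inv a"] ac unfolding N_def by simp
    moreover have "w [^] N = \<one>"
    proof -
      have "ord w dvd Suc n" using wn pow_eq_id[OF wc] by blast
      then have "ord w dvd N" unfolding N_def mult.assoc by (rule dvd_mult2)
      then show ?thesis using pow_eq_id[OF wc] by blast
    qed
    ultimately show "z [^] N = \<one>" by simp
  qed
  then show ?thesis using N0 by blast
qed


theorem proposition2p13:
  fixes G :: "('a, 'b) monoid_scheme" and T :: "'a topology"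
  assumes "comm_group G" and "profinite_C_group G T"
  shows "(C_group G \<longleftrightarrow> torsion_group G) \<and>
         (torsion_group G \<longleftrightarrow> (\<exists>e. is_exponent G e \<and> squarefree e))"
proof -
  interpret comm_group G by (rule assms(1))
  have PG: "profinite_group G T" using assms(2) unfolding profinite_C_group_def by blast
  have ordpos: "ord x \<noteq> 0" if tor: "torsion_group G" and xc: "x \<in> carrier G" for x
  proof -
    have "\<exists>n::nat. n > 0 \<and> x [^]\<^bsub>G\<^esub> n = \<one>\<^bsub>G\<^esub>" using tor xc unfolding torsion_group_def by (rule bspec)
    then obtain n :: nat where n: "n > 0" "x [^]\<^bsub>G\<^esub> n = \<one>\<^bsub>G\<^esub>" by (elim exE conjE)
    then have "ord x dvd n" using pow_eq_id[OF xc] by blast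
    then show ?thesis using n(1) by (metis dvd_0_left_iff less_irrefl)
  qed
  have sqf: "squarefree (ord x)" if tor: "torsion_group G" and xc: "x \<in> carrier G" for x
    using ord_squarefree[OF assms(2) xc ordpos[OF tor xc]] .
  have 1: "C_group G \<longleftrightarrow> torsion_group G"
  proof
    assume "C_group G" then show "torsion_group G" by (rule C_imp_torsion)
  next
    assume tor: "torsion_group G"
    show "C_group G"
      by (rule torsion_sqf_imp_C) (use ordpos[OF tor] sqf[OF tor] in blast)+
  qed
  have 2: "\<exists>e. is_exponent G e \<and> squarefree e" if tor: "torsion_group G"
  proof -
    obtain N :: nat where N: "N > 0" "\<forall>x\<in>carrier G. x [^]\<^bsub>G\<^esub> N = \<one>\<^bsub>G\<^esub>"
      using bounded_exp[OF PG tor] by blast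
    define P where "P m \<longleftrightarrow> m > 0 \<and> (\<forall>x\<in>carrier G. x [^]\<^bsub>G\<^esub> m = \<one>\<^bsub>G\<^esub>)" for m :: nat
    define e where "e = (LEAST m. P m)"
    have Pe: "P e" unfolding e_def by (rule LeastI[of P N]) (simp add: P_def N)
    have emin: "e \<le> m" if "P m" for m unfolding e_def by (rule Least_le) (rule that)
    have ie: "is_exponent G e" unfolding is_exponent_def using Pe emin by (simp add: P_def)
    have "squarefree e"
    proof (rule ccontr)
      assume nsq: "\<not> squarefree e"
      have e0: "e \<noteq> 0" using Pe P_def by simp
      obtain p :: nat where p: "prime p" and pe: "p^2 dvd e"
        using nsq squarefree_factorial_semiring[OF e0] by blast
      obtain c where c: "e = p^2 * c" using pe by blast
      have c0: "c > 0" using c e0 by (cases c) auto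
      have p1: "p > 1" using p prime_gt_1_nat by blast
      have ediv: "e div p = p * c" using c p1 by (simp add: power2_eq_square)
      have pos: "e div p > 0" using ediv p1 c0 by simp
      have lt: "e div p < e" using e0 p1 by simp
      have "\<forall>x\<in>carrier G. x [^]\<^bsub>G\<^esub> (e div p) = \<one>\<^bsub>G\<^esub>"
      proof
        fix x assume xc: "x \<in> carrier G"
        have "ord x dvd e" using Pe P_def xc pow_eq_id[OF xc] by blast
        then have "ord x dvd e div p" using sqf_dvd_div[OF p pe _ sqf[OF tor xc]] by blast
        then show "x [^]\<^bsub>G\<^esub> (e div p) = \<one>\<^bsub>G\<^esub>" using pow_eq_id[OF xc] by blast
      qed
      then have "P (e div p)" using pos P_def by simp
      then have "e \<le> e div p" by (rule emin)
      then show False using lt by simp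
    qed
    then show ?thesis using ie by blast
  qed
  have 3: "torsion_group G" if "\<exists>e. is_exponent G e \<and> squarefree e"
    using that unfolding is_exponent_def torsion_group_def by blast
  show ?thesis using 1 2 3 by blast
qed

end
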